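(* Let ${\bf m}=(m_1,\dots,m_n)$ and ${\bf a}=(a_1,\dots,a_n)$ be vectors of nonnegative integers with $\|{\bf a}\|<\|{\bf m}\|$ for which at least one $({\bf m},{\bf a})$-permutation exists. For $i\in[n]$, let $f_i({\bf m},{\bf a})$ be the fraction of all $({\bf m},{\bf a})$-permutations whose last term is $i$. Then \[f_i({\bf m},{\bf a})\le\frac{m_i}{\|{\bf m}\|-a_i}.\]
   Context: $\|v\|=\sum_i |v_i|$. An ${\bf m}$-permutation is a word of length $\|{\bf m}\|$ over the alphabet $[n]$ in which each $i$ appears exactly $m_i$ times. An $({\bf m},{\bf a})$-permutation is an ${\bf m}$-permutation $\pi$ such that the first $a_1$ terms are not $1$, the next $a_2$ terms are not $2$, and so on (so positions $a_1+\dots+a_{i-1}+1,\dots,a_1+\dots+a_i$ are forbidden from taking the value $i$). *)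

theory Defs
  imports Complex_Main "HOL-Library.Multiset"
begin

text \<open>Vectors m = (m_1..m_n), a = (a_1..a_n) are functions nat => nat; only indices 1..n matter.
  Words are lists; positions of a list are 0-indexed, so the paper's positions
  a_1+..+a_(i-1)+1 .. a_1+..+a_i correspond to list indices in
  [a_1+..+a_(i-1), a_1+..+a_i).\<close>

definition norm1 :: "nat \<Rightarrow> (nat \<Rightarrow> nat) \<Rightarrow> nat" where
  "norm1 n v = (\<Sum>i=1..n. v i)"

definition m_perm :: "nat \<Rightarrow> (nat \<Rightarrow> nat) \<Rightarrow> nat list \<Rightarrow> bool" where
  "m_perm n m w \<longleftrightarrow> length w = norm1 n m \<and> set w \<subseteq> {1..n}
     \<and> (\<forall>i\<in>{1..n}. count (mset w) i = m i)"

definition ma_perm :: "nat \<Rightarrow> (nat \<Rightarrow> nat) \<Rightarrow> (nat \<Rightarrow> nat) \<Rightarrow> nat list \<Rightarrow> bool" where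
  "ma_perm n m a w \<longleftrightarrow> m_perm n m w \<and>
     (\<forall>i\<in>{1..n}. \<forall>p. (\<Sum>j=1..<i. a j) \<le> p \<and> p < (\<Sum>j=1..i. a j) \<and> p < length w
        \<longrightarrow> w ! p \<noteq> i)"

definition ma_perms :: "nat \<Rightarrow> (nat \<Rightarrow> nat) \<Rightarrow> (nat \<Rightarrow> nat) \<Rightarrow> nat list set" where
  "ma_perms n m a = {w. ma_perm n m a w}"

definition frac_last :: "nat \<Rightarrow> (nat \<Rightarrow> nat) \<Rightarrow> (nat \<Rightarrow> nat) \<Rightarrow> nat \<Rightarrow> real" where
  "frac_last n m a i = real (card {w \<in> ma_perms n m a. last w = i}) / real (card (ma_perms n m a))"

end

theory Submission
  imports Defs
begin

lemma count_card: "count (mset xs) k = card {j. j < length xs \<and> xs ! j = k}"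
proof -
  have "count (mset xs) k = length (filter (HOL.eq k) xs)"
    by (metis length_replicate replicate_count_mset_eq_filter_eq)
  also have "\<dots> = card {j. j < length xs \<and> xs ! j = k}"
    by (simp add: length_filter_conv_card eq_commute)
  finally show ?thesis .
qed

definition swp :: "nat \<Rightarrow> nat \<Rightarrow> nat list \<Rightarrow> nat list" where
  "swp q r w = w[q := w ! r, r := w ! q]"

lemma swp_len[simp]: "length (swp q r w) = length w"
  by (simp add: swp_def)

lemma swp_invol: "q < length w \<Longrightarrow> r < length w \<Longrightarrow> swp q r (swp q r w) = w"
  by (rule nth_equalityI) (auto simp: swp_def nth_list_update)

lemma swp_nth: "q < length w \<Longrightarrow> r < length w \<Longrightarrow> p < length w \<Longrightarrow>
   swp q r w ! p = (if p = r then w ! q else if p = q then w ! r else w ! p)"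
  by (auto simp: swp_def nth_list_update)

lemma sum_le_mono: "j \<le> n \<Longrightarrow> (\<Sum>k=1..j. a k) \<le> (\<Sum>k=1..n. (a::nat\<Rightarrow>nat) k)"
  by (rule sum_mono2) auto

lemma dbl_count:
  assumes "finite A" "finite B"
  shows "(\<Sum>x\<in>A. card {y\<in>B. R x y}) = (\<Sum>y\<in>B. card {x\<in>A. R x y})"
proof -
  have c: "\<And>C P. finite C \<Longrightarrow> card {z\<in>C. P z} = (\<Sum>z\<in>C. if P z then 1 else (0::nat))"
    by (simp add: sum.inter_filter[symmetric])
  show ?thesis using assms by (simp add: c sum.swap[of _ A])
qed

theorem lemma3p5:
  fixes n :: nat and m a :: "nat \<Rightarrow> nat" and i :: nat
  assumes "norm1 n a < norm1 n m"
    and "ma_perms n m a \<noteq> {}"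
    and "i \<in> {1..n}"
  shows "frac_last n m a i \<le> real (m i) / (real (norm1 n m) - real (a i))"
proof -
  define N where "N = norm1 n m"
  define A where "A = norm1 n a"
  define P where "P = ma_perms n m a"
  define lo where "lo = (\<Sum>j=1..<i. a j)"
  define hi where "hi = (\<Sum>j=1..i. a j)"
  define S where "S = {0..<N} - {lo..<hi}"
  define Pi where "Pi = {w \<in> P. last w = i}"
  have AN: "A < N" using assms(1) by (simp add: A_def N_def)
  have hilo: "hi = lo + a i" using assms(3) unfolding hi_def lo_def
    by (metis One_nat_def atLeastAtMost_iff atLeastLessThanSuc_atLeastAtMost sum.atLeastLessThan_Suc add.commute le_Suc_ex Suc_le_mono)
  have hiA: "hi \<le> A" using assms(3) sum_le_mono[of i n a] by (simp add: hi_def A_def norm1_def)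
  have blk: "\<And>j. j \<in> {1..n} \<Longrightarrow> (\<Sum>k=1..j. a k) \<le> A"
    using sum_le_mono by (auto simp: A_def norm1_def)
  have cardS: "card S = N - a i"
  proof -
    have "{lo..<hi} \<subseteq> {0..<N}" using hiA AN by auto
    then show ?thesis unfolding S_def by (simp add: card_Diff_subset hilo)
  qed
  have Psub: "P \<subseteq> {w. set w \<subseteq> {1..n} \<and> length w = N}"
    by (auto simp: P_def ma_perms_def ma_perm_def m_perm_def N_def)
  have finP: "finite P"
    by (rule finite_subset[OF Psub finite_lists_length_eq]) simp
  have lenP: "\<And>w. w \<in> P \<Longrightarrow> length w = N"
    using Psub by auto
  have cntP: "\<And>w. w \<in> P \<Longrightarrow> card {q \<in> S. w ! q = i} = m i"
  proof -
    fix w assume w: "w \<in> P"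
    have "{q \<in> S. w ! q = i} = {j. j < length w \<and> w ! j = i}"
      using w lenP[OF w] assms(3)
      by (auto simp: S_def P_def ma_perms_def ma_perm_def lo_def hi_def)
    moreover have "count (mset w) i = m i"
      using w assms(3) by (simp add: P_def ma_perms_def ma_perm_def m_perm_def)
    ultimately show "card {q \<in> S. w ! q = i} = m i"
      by (simp add: count_card)
  qed
  have key: "\<And>q. q \<in> S \<Longrightarrow> card Pi \<le> card {w \<in> P. w ! q = i}"
  proof -
    fix q assume q: "q \<in> S"
    have qN: "q < N" using q by (simp add: S_def)
    have N1: "N - 1 < N" using AN by simp
    have "inj_on (swp q (N-1)) Pi"
      by (rule inj_on_inverseI[where g="swp q (N-1)"])
         (use qN N1 lenP in \<open>auto simp: Pi_def intro!: swp_invol\<close>)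
    moreover have "swp q (N-1) ` Pi \<subseteq> {w \<in> P. w ! q = i}"
    proof
      fix v assume "v \<in> swp q (N-1) ` Pi"
      then obtain w where w: "w \<in> P" "last w = i" and v: "v = swp q (N-1) w"
        by (auto simp: Pi_def)
      have lw: "length w = N" using lenP[OF w(1)] .
      have wl: "w ! (N-1) = i" using w(2) lw AN
        by (metis last_conv_nth less_nat_zero_code list.size(3))
      have vq: "v ! q = i" using qN N1 lw wl by (auto simp: v swp_nth)
      have ms: "mset v = mset w" using qN N1 lw by (simp add: v swp_def mset_swap)
      have ss: "set v = set w" using qN N1 lw by (simp add: v swp_def)
      have "ma_perm n m a v"
        unfolding ma_perm_def m_perm_def
      proof (intro conjI ballI allI impI)
        show "length v = norm1 n m" using lw by (simp add: v N_def)
        show "set v \<subseteq> {1..n}" using w(1) ss by (simp add: P_def ma_perms_def ma_perm_def m_perm_def)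
        fix j assume j: "j \<in> {1..n}"
        then show "count (mset v) j = m j" using w(1) ms by (simp add: P_def ma_perms_def ma_perm_def m_perm_def)
        fix p assume p: "(\<Sum>k = 1..<j. a k) \<le> p \<and> p < (\<Sum>k = 1..j. a k) \<and> p < length v"
        have pA: "p < A" using p blk[OF j] by linarith
        hence pN1: "p \<noteq> N - 1" using AN by linarith
        show "v ! p \<noteq> j"
        proof (cases "p = q")
          case True
          have "j \<noteq> i" using q p True unfolding S_def lo_def hi_def by auto
          then show ?thesis using True vq by simp
        next
          case False
          then have "v ! p = w ! p" using qN N1 lw p pN1 by (simp add: v swp_nth)
          moreover have "p < length w" using p lw by (simp add: v)
          moreover have "\<forall>j\<in>{1..n}. \<forall>p. (\<Sum>k = 1..<j. a k) \<le> p \<and> p < (\<Sum>k = 1..j. a k) \<and> p < length w \<longrightarrow> w ! p \<noteq> j"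
            using w(1) by (simp add: P_def ma_perms_def ma_perm_def)
          ultimately show ?thesis using j p by metis
        qed
      qed
      then show "v \<in> {w \<in> P. w ! q = i}" using vq by (simp add: P_def ma_perms_def)
    qed
    moreover have "finite {w \<in> P. w ! q = i}" using finP by simp
    ultimately show "card Pi \<le> card {w \<in> P. w ! q = i}"
      by (metis card_image card_mono)
  qed
  have "card Pi * (N - a i) = (\<Sum>q\<in>S. card Pi)" using cardS by simp
  also have "\<dots> \<le> (\<Sum>q\<in>S. card {w \<in> P. w ! q = i})" by (rule sum_mono) (rule key)
  also have "\<dots> = (\<Sum>w\<in>P. card {q \<in> S. w ! q = i})"
    using finP using dbl_count[of S P "\<lambda>q w. w ! q = i"] by (simp add: S_def)
  also have "\<dots> = m i * card P" using cntP by simp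
  finally have ineq: "card Pi * (N - a i) \<le> m i * card P" .
  have cP: "card P > 0" using finP assms(2) by (simp add: P_def card_gt_0_iff)
  have aiN: "a i < N" using hilo hiA AN by linarith
  have "real (card Pi) * real (N - a i) \<le> real (m i) * real (card P)"
    using ineq by (metis of_nat_le_iff of_nat_mult)
  then have "real (card Pi) / real (card P) \<le> real (m i) / real (N - a i)"
    using cP aiN by (simp add: divide_simps)
  then show ?thesis using aiN
    by (simp add: frac_last_def Pi_def P_def N_def of_nat_diff)
qed

end
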